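(* Let $R\ge1$ and let $G$ be an observable of $R$ replicas. For every finite box $\Lambda$ and every $\beta$, $$\Delta_1 G=-\beta\Big\langle G\Big[\sum_{\substack{k,l=1\\k\ne l}}^{R}q_{l,k}-2R\sum_{l=1}^{R}q_{l,R+1}+R(R+1)\,q_{R+1,R+2}\Big]\Big\rangle,$$ where $\Delta_1 G=\sum_{l=1}^{R}\mathrm{Av}\big(\Omega_R[h(\sigma^{(l)})G]-\Omega_R[h(\sigma^{(l)})]\,\Omega_R[G]\big)$ and $h(\sigma)=H_\Lambda(\sigma)/|\Lambda|$.
   Context: For each finite $d$-dimensional parallelepiped $\Lambda\subset\mathbb{Z}^d$ let $\Sigma_\Lambda=\{-1,1\}^\Lambda$, and for $X\subset\Lambda$ let $\sigma_X=\prod_{i\in X}\sigma_i$ (with $\sigma_\emptyset=0$). Let $\{J_X\}$ be independent centered Gaussian random variables with variances $\mathrm{Av}(J_X^2)=\Delta_X^2$, translation invariant, where $\mathrm{Av}$ denotes expectation over the $J$'s. The Hamiltonian is $H_\Lambda(\sigma)=-\sum_{X\subset\Lambda}J_X\sigma_X$, with normalized covariance $c_\Lambda(\sigma,\tau)=\frac{1}{|\Lambda|}\sum_{X\subset\Lambda}\Delta_X^2\sigma_X\tau_X$. Let $\mathcal{Z}(\beta)=\sum_{\sigma}e^{-\beta H_\Lambda(\sigma)}$ and for $n\ge1$ the $n$-replica random Gibbs state $\Omega_n(f)=\sum_{\sigma^{(1)},\dots,\sigma^{(n)}}f\,e^{-\beta\sum_{i=1}^n H_\Lambda(\sigma^{(i)})}/\mathcal{Z}(\beta)^n$.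 An observable of $R$ replicas is a smooth function $G$ of an $R\times R$ real matrix with $|G|\le1$, evaluated at $(c_\Lambda(\sigma^{(k)},\sigma^{(l)}))_{k,l\le R}$. Notation: $\langle G\,q_{k,l}\rangle=\mathrm{Av}\,\Omega_n\big(G((c_\Lambda(\sigma^{(i)},\sigma^{(j)}))_{i,j\le R})\,c_\Lambda(\sigma^{(k)},\sigma^{(l)})\big)$ with $n=\max(R,k,l)$, extended linearly to sums. *)

theory Defs
  imports "HOL-Probability.Probability"
begin

text \<open>Smooth (C-infinity) real functions on a Euclidean space: differentiable everywhere,
  and every partial derivative is again smooth (coinductively: derivatives of all orders exist).\<close>
coinductive smooth_fun :: "('a::euclidean_space \<Rightarrow> real) \<Rightarrow> bool" where
  "f differentiable_on UNIV \<Longrightarrow>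
   (\<forall>b\<in>Basis. smooth_fun (\<lambda>x. frechet_derivative f (at x) b)) \<Longrightarrow> smooth_fun f"

definition box_set :: "int^'d \<Rightarrow> int^'d \<Rightarrow> (int^'d) set" where
  "box_set a b = {x. \<forall>i. a $ i \<le> x $ i \<and> x $ i \<le> b $ i}"

definition configs :: "'p set \<Rightarrow> ('p \<Rightarrow> real) set" where
  "configs L = PiE L (\<lambda>_. {-1, 1})"

text \<open>sigma_X, with the convention sigma_empty = 0.\<close>
definition sigX :: "('p \<Rightarrow> real) \<Rightarrow> 'p set \<Rightarrow> real" where
  "sigX \<sigma> X = (if X = {} then 0 else (\<Prod>i\<in>X. \<sigma> i))"

definition Ham :: "'p set \<Rightarrow> ('p set \<Rightarrow> real) \<Rightarrow> ('p \<Rightarrow> real) \<Rightarrow> real" where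
  "Ham L J \<sigma> = - (\<Sum>X\<in>Pow L. J X * sigX \<sigma> X)"

text \<open>Normalized covariance c_Lambda; Delta X is the standard deviation of J_X.\<close>
definition cov :: "'p set \<Rightarrow> ('p set \<Rightarrow> real) \<Rightarrow> ('p \<Rightarrow> real) \<Rightarrow> ('p \<Rightarrow> real) \<Rightarrow> real" where
  "cov L \<Delta> \<sigma> \<tau> = (1 / real (card L)) * (\<Sum>X\<in>Pow L. (\<Delta> X)\<^sup>2 * sigX \<sigma> X * sigX \<tau> X)"

definition Zpart :: "'p set \<Rightarrow> ('p set \<Rightarrow> real) \<Rightarrow> real \<Rightarrow> real" where
  "Zpart L J \<beta> = (\<Sum>\<sigma>\<in>configs L. exp (- \<beta> * Ham L J \<sigma>))"

definition Omega :: "'p set \<Rightarrow> ('p set \<Rightarrow> real) \<Rightarrow> real \<Rightarrow> nat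
    \<Rightarrow> ((nat \<Rightarrow> 'p \<Rightarrow> real) \<Rightarrow> real) \<Rightarrow> real" where
  "Omega L J \<beta> n f =
     (\<Sum>s\<in>PiE {1..n} (\<lambda>_. configs L). f s * exp (- \<beta> * (\<Sum>i=1..n. Ham L J (s i))))
       / (Zpart L J \<beta>) ^ n"

text \<open>Average over the disorder: J_X = Delta X * g_X with g_X (X subset of L) i.i.d. standard Gaussians.\<close>
definition Av :: "'p set \<Rightarrow> ('p set \<Rightarrow> real) \<Rightarrow> (('p set \<Rightarrow> real) \<Rightarrow> real) \<Rightarrow> real" where
  "Av L \<Delta> F = (\<integral>g. F (\<lambda>X. \<Delta> X * g X) \<partial>(PiM (Pow L) (\<lambda>_. density lborel std_normal_density)))"

text \<open>Observable of R replicas evaluated on replica configurations s;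
  iota enumerates the matrix index type as the replicas 1..R.\<close>
definition obs :: "'p set \<Rightarrow> ('p set \<Rightarrow> real) \<Rightarrow> ('r \<Rightarrow> nat) \<Rightarrow> (real^'r^'r \<Rightarrow> real)
    \<Rightarrow> (nat \<Rightarrow> 'p \<Rightarrow> real) \<Rightarrow> real" where
  "obs L \<Delta> \<iota> G s = G (\<chi> a b. cov L \<Delta> (s (\<iota> a)) (s (\<iota> b)))"

definition bracket :: "'p set \<Rightarrow> ('p set \<Rightarrow> real) \<Rightarrow> real \<Rightarrow> nat \<Rightarrow> ('r \<Rightarrow> nat)
    \<Rightarrow> (real^'r^'r \<Rightarrow> real) \<Rightarrow> nat \<Rightarrow> nat \<Rightarrow> real" where
  "bracket L \<Delta> \<beta> R \<iota> G k l =
     Av L \<Delta> (\<lambda>J. Omega L J \<beta> (max R (max k l))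
        (\<lambda>s. obs L \<Delta> \<iota> G s * cov L \<Delta> (s k) (s l)))"

definition Delta1 :: "'p set \<Rightarrow> ('p set \<Rightarrow> real) \<Rightarrow> real \<Rightarrow> nat \<Rightarrow> ('r \<Rightarrow> nat)
    \<Rightarrow> (real^'r^'r \<Rightarrow> real) \<Rightarrow> real" where
  "Delta1 L \<Delta> \<beta> R \<iota> G =
     (\<Sum>l=1..R. Av L \<Delta> (\<lambda>J.
        Omega L J \<beta> R (\<lambda>s. Ham L J (s l) / real (card L) * obs L \<Delta> \<iota> G s)
        - Omega L J \<beta> R (\<lambda>s. Ham L J (s l) / real (card L)) * Omega L J \<beta> R (obs L \<Delta> \<iota> G)))"

end

theory Submission
  imports Defs "HOL-Real_Asymp.Real_Asymp"
begin


lemma finite_configs: "finite L \<Longrightarrow> finite (configs L)"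
  unfolding configs_def by (intro finite_PiE) auto

lemma configs_ne: "configs L \<noteq> {}"
  unfolding configs_def by (simp add: PiE_eq_empty_iff)

lemma Zpart_pos: "finite L \<Longrightarrow> Zpart L J \<beta> > 0"
  unfolding Zpart_def
  by (intro sum_pos finite_configs configs_ne) auto

lemma sum_PiE_insert:
  assumes "finite A" "a \<notin> A" "finite (B a)"
  shows "(\<Sum>g\<in>PiE (insert a A) B. F g) = (\<Sum>y\<in>B a. \<Sum>g\<in>PiE A B. F (g(a:=y)))"
proof -
  have "(\<Sum>g\<in>PiE (insert a A) B. F g) = (\<Sum>p\<in>B a \<times> PiE A B. F ((\<lambda>(y, g). g(a := y)) p))"
    unfolding PiE_insert_eq using inj_combinator[OF assms(2)]
    by (subst sum.reindex) (auto simp: case_prod_beta)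
  also have "\<dots> = (\<Sum>y\<in>B a. \<Sum>g\<in>PiE A B. F (g(a:=y)))"
    by (simp add: sum.cartesian_product case_prod_beta)
  finally show ?thesis .
qed

lemma sigX_sq:
  assumes "\<sigma> \<in> configs L" "X \<subseteq> L"
  shows "sigX \<sigma> X * sigX \<sigma> X = (if X = {} then 0 else 1)"
proof (cases "X = {}")
  case True thus ?thesis by (simp add: sigX_def)
next
  case False
  have "\<forall>i\<in>X. \<sigma> i * \<sigma> i = 1" using assms by (fastforce simp: configs_def PiE_iff)
  then have "(\<Prod>i\<in>X. \<sigma> i * \<sigma> i) = 1" by simp
  thus ?thesis using False by (simp add: sigX_def prod.distrib)
qed

lemma Ham_upd:
  assumes "finite L" "X \<in> Pow L"
  shows "Ham L (J(X:=t)) \<sigma> = Ham L J \<sigma> + (J X - t) * sigX \<sigma> X"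
proof -
  have f: "finite (Pow L)" using assms by simp
  have "Ham L (J(X:=t)) \<sigma> = - (t * sigX \<sigma> X + (\<Sum>Y\<in>Pow L - {X}. J Y * sigX \<sigma> Y))"
  proof -
    have "(\<Sum>Y\<in>Pow L - {X}. (J(X:=t)) Y * sigX \<sigma> Y) = (\<Sum>Y\<in>Pow L - {X}. J Y * sigX \<sigma> Y)"
      by (rule sum.cong) auto
    then show ?thesis
      unfolding Ham_def using sum.remove[OF f assms(2), of "\<lambda>Y. (J(X:=t)) Y * sigX \<sigma> Y"] by simp
  qed
  moreover have "Ham L J \<sigma> = - (J X * sigX \<sigma> X + (\<Sum>Y\<in>Pow L - {X}. J Y * sigX \<sigma> Y))"
    unfolding Ham_def using sum.remove[OF f assms(2), of "\<lambda>Y. J Y * sigX \<sigma> Y"] by simp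
  ultimately show ?thesis by (simp add: algebra_simps)
qed

lemma exp_sum_Ham: "exp (- \<beta> * (\<Sum>i=1..(n::nat). H (s i))) = (\<Prod>i=1..n. exp (- \<beta> * H (s i)))"
proof -
  have "- \<beta> * (\<Sum>i=1..n. H (s i)) = (\<Sum>i=1..n. - \<beta> * H (s i))" by (rule sum_distrib_left)
  then show ?thesis using exp_sum[of "{1..n}" "\<lambda>i. - \<beta> * H (s i)"] by simp
qed

lemma weight_le:
  assumes "finite L" "s \<in> PiE {1..n} (\<lambda>_. configs L)"
  shows "exp (- \<beta> * (\<Sum>i=1..n. Ham L J (s i))) \<le> Zpart L J \<beta> ^ n"
proof -
  have "(\<Prod>i=1..n. exp (- \<beta> * Ham L J (s i))) \<le> (\<Prod>i=1..n. Zpart L J \<beta>)"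
  proof (rule prod_mono, safe)
    fix i assume "i \<in> {1..n}"
    then have "s i \<in> configs L" using assms(2) by auto
    then show "exp (- \<beta> * Ham L J (s i)) \<le> Zpart L J \<beta>"
      unfolding Zpart_def
      by (rule member_le_sum[where f="\<lambda>\<sigma>. exp (- \<beta> * Ham L J \<sigma>)"]) (auto intro: finite_configs assms)
  qed simp
  then show ?thesis using exp_sum_Ham[of \<beta> "Ham L J" s n] by simp
qed

lemma Omega_bound:
  assumes "finite L"
  shows "\<bar>Omega L J \<beta> n f\<bar> \<le> (\<Sum>s\<in>PiE {1..n} (\<lambda>_. configs L). \<bar>f s\<bar>)"
proof -
  let ?Z = "Zpart L J \<beta> ^ n"
  have Z: "?Z > 0" using Zpart_pos[OF assms] by simp
  have "\<bar>Omega L J \<beta> n f\<bar> \<le> (\<Sum>s\<in>PiE {1..n} (\<lambda>_. configs L). \<bar>f s * exp (- \<beta> * (\<Sum>i=1..n. Ham L J (s i)))\<bar>) / ?Z"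
  proof -
    have "\<bar>Omega L J \<beta> n f\<bar> = \<bar>\<Sum>s\<in>PiE {1..n} (\<lambda>_. configs L). f s * exp (- \<beta> * (\<Sum>i=1..n. Ham L J (s i)))\<bar> / \<bar>?Z\<bar>"
      unfolding Omega_def by (rule abs_divide)
    also have "\<dots> \<le> (\<Sum>s\<in>PiE {1..n} (\<lambda>_. configs L). \<bar>f s * exp (- \<beta> * (\<Sum>i=1..n. Ham L J (s i)))\<bar>) / ?Z"
      using Z divide_right_mono[OF sum_abs, of ?Z "\<lambda>s. f s * exp (- \<beta> * (\<Sum>i=1..n. Ham L J (s i)))" "PiE {1..n} (\<lambda>_. configs L)"]
      by simp
    finally show ?thesis .
  qed
  also have "\<dots> \<le> (\<Sum>s\<in>PiE {1..n} (\<lambda>_. configs L). \<bar>f s\<bar> * ?Z) / ?Z"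
  proof (intro divide_right_mono sum_mono)
    fix s assume s: "s \<in> PiE {1..n} (\<lambda>_. configs L)"
    have "exp (- \<beta> * (\<Sum>i=1..n. Ham L J (s i))) \<le> ?Z" by (rule weight_le[OF assms s])
    then show "\<bar>f s * exp (- \<beta> * (\<Sum>i=1..n. Ham L J (s i)))\<bar> \<le> \<bar>f s\<bar> * ?Z"
      by (simp add: abs_mult mult_left_mono)
  qed (use Z in simp)
  also have "\<dots> = (\<Sum>s\<in>PiE {1..n} (\<lambda>_. configs L). \<bar>f s\<bar>)"
    using Zpart_pos[OF assms, of J \<beta>] by (simp add: sum_distrib_right[symmetric])
  finally show ?thesis .
qed

lemma Omega_cong:
  "(\<And>s. s \<in> PiE {1..n} (\<lambda>_. configs L) \<Longrightarrow> f s = g s) \<Longrightarrow> Omega L J \<beta> n f = Omega L J \<beta> n g"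
  unfolding Omega_def by (auto intro!: sum.cong)

lemma Omega_add: "Omega L J \<beta> n (\<lambda>s. f s + g s) = Omega L J \<beta> n f + Omega L J \<beta> n g"
  unfolding Omega_def by (simp add: distrib_right sum.distrib add_divide_distrib)

lemma Omega_diff: "Omega L J \<beta> n (\<lambda>s. f s - g s) = Omega L J \<beta> n f - Omega L J \<beta> n g"
  unfolding Omega_def by (simp add: left_diff_distrib sum_subtractf diff_divide_distrib)

lemma Omega_cmult: "Omega L J \<beta> n (\<lambda>s. c * f s) = c * Omega L J \<beta> n f"
  unfolding Omega_def by (simp add: mult.assoc sum_distrib_left[symmetric])

lemma Omega_sum: "finite A \<Longrightarrow> Omega L J \<beta> n (\<lambda>s. \<Sum>a\<in>A. f a s) = (\<Sum>a\<in>A. Omega L J \<beta> n (f a))"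
  by (induction A rule: finite_induct) (simp_all add: Omega_add, simp add: Omega_def)

lemma Omega_1:
  assumes "finite L"
  shows "Omega L J \<beta> 1 (\<lambda>s. u (s 1)) = (\<Sum>\<sigma>\<in>configs L. u \<sigma> * exp (- \<beta> * Ham L J \<sigma>)) / Zpart L J \<beta>"
proof -
  have "(\<Sum>s\<in>PiE {1..1::nat} (\<lambda>_. configs L). u (s 1) * exp (- \<beta> * (\<Sum>i=1..1. Ham L J (s i))))
     = (\<Sum>s\<in>PiE (insert (1::nat) {}) (\<lambda>_. configs L). u (s 1) * exp (- \<beta> * Ham L J (s 1)))"
  proof -
    have e: "{1..1::nat} = insert 1 {}" by auto
    show ?thesis unfolding e by simp
  qed
  also have "\<dots> = (\<Sum>\<sigma>\<in>configs L. u \<sigma> * exp (- \<beta> * Ham L J \<sigma>))"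
    by (subst sum_PiE_insert) (auto intro: finite_configs assms)
  finally show ?thesis unfolding Omega_def by simp
qed




lemma Omega_factor:
  assumes L: "finite L" and f: "\<And>g y. f (g(Suc n := y)) = f g"
  shows "Omega L J \<beta> (Suc n) (\<lambda>s. f s * u (s (Suc n))) = Omega L J \<beta> n f * Omega L J \<beta> 1 (\<lambda>s. u (s 1))"
proof -
  let ?w = "\<lambda>\<sigma>. exp (- \<beta> * Ham L J \<sigma>)"
  let ?P = "PiE {1..n} (\<lambda>_. configs L)"
  have Z: "Zpart L J \<beta> > 0" using Zpart_pos[OF L] .
  have eq: "{1..Suc n} = insert (Suc n) {1..n}" by auto
  have "(\<Sum>s\<in>PiE {1..Suc n} (\<lambda>_. configs L). f s * u (s (Suc n)) * exp (- \<beta> * (\<Sum>i=1..Suc n. Ham L J (s i))))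
     = (\<Sum>y\<in>configs L. \<Sum>g\<in>?P. f (g(Suc n := y)) * u ((g(Suc n := y)) (Suc n)) *
          exp (- \<beta> * (\<Sum>i=1..Suc n. Ham L J ((g(Suc n := y)) i))))"
    unfolding eq by (subst sum_PiE_insert) (auto intro: finite_configs L)
  also have "\<dots> = (\<Sum>y\<in>configs L. \<Sum>g\<in>?P. (f g * exp (- \<beta> * (\<Sum>i=1..n. Ham L J (g i)))) * (u y * ?w y))"
  proof (intro sum.cong refl)
    fix y g
    have "(\<Sum>i=1..Suc n. Ham L J ((g(Suc n := y)) i)) = (\<Sum>i=1..n. Ham L J (g i)) + Ham L J y"
      by (simp add: sum.atLeast1_atMost_eq)
    then show "f (g(Suc n := y)) * u ((g(Suc n := y)) (Suc n)) * exp (- \<beta> * (\<Sum>i=1..Suc n. Ham L J ((g(Suc n := y)) i)))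
       = (f g * exp (- \<beta> * (\<Sum>i=1..n. Ham L J (g i)))) * (u y * ?w y)"
      by (simp add: f algebra_simps flip: exp_add)
  qed
  also have "\<dots> = (\<Sum>g\<in>?P. f g * exp (- \<beta> * (\<Sum>i=1..n. Ham L J (g i)))) * (\<Sum>y\<in>configs L. u y * ?w y)"
    by (simp add: sum_distrib_left sum_distrib_right sum.swap[of _ "configs L"])
  finally show ?thesis
    unfolding Omega_def[of _ _ _ "Suc n"] Omega_def[of _ _ _ n] Omega_1[OF L] using Z
    by (simp add: field_simps)
qed

lemma Omega_marg:
  assumes L: "finite L" and l: "l \<in> {1..n}"
  shows "Omega L J \<beta> n (\<lambda>s. u (s l)) = Omega L J \<beta> 1 (\<lambda>s. u (s 1))"
proof -
  let ?w = "\<lambda>\<sigma>. exp (- \<beta> * Ham L J \<sigma>)"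
  let ?Z = "Zpart L J \<beta>"
  have Z: "?Z > 0" using Zpart_pos[OF L] .
  let ?h = "\<lambda>i \<sigma>. if i = l then u \<sigma> * ?w \<sigma> else ?w \<sigma>"
  have "(\<Sum>s\<in>PiE {1..n} (\<lambda>_. configs L). u (s l) * exp (- \<beta> * (\<Sum>i=1..n. Ham L J (s i))))
      = (\<Sum>s\<in>PiE {1..n} (\<lambda>_. configs L). \<Prod>i\<in>{1..n}. ?h i (s i))"
  proof (intro sum.cong refl)
    fix s
    have "(\<Prod>i\<in>{1..n}. ?h i (s i)) = ?h l (s l) * (\<Prod>i\<in>{1..n}-{l}. ?h i (s i))"
      using l by (simp add: prod.remove)
    also have "(\<Prod>i\<in>{1..n}-{l}. ?h i (s i)) = (\<Prod>i\<in>{1..n}-{l}. ?w (s i))"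
      by (rule prod.cong) auto
    also have "?h l (s l) * (\<Prod>i\<in>{1..n}-{l}. ?w (s i)) = u (s l) * (?w (s l) * (\<Prod>i\<in>{1..n}-{l}. ?w (s i)))"
      by simp
    also have "?w (s l) * (\<Prod>i\<in>{1..n}-{l}. ?w (s i)) = (\<Prod>i\<in>{1..n}. ?w (s i))"
      using l by (simp add: prod.remove)
    finally show "u (s l) * exp (- \<beta> * (\<Sum>i=1..n. Ham L J (s i))) = (\<Prod>i\<in>{1..n}. ?h i (s i))"
      using exp_sum_Ham[of \<beta> "Ham L J" s n] by simp
  qed
  also have "\<dots> = (\<Prod>i\<in>{1..n}. \<Sum>\<sigma>\<in>configs L. ?h i \<sigma>)"
    by (rule prod_sum_PiE[symmetric]) (auto intro: finite_configs L)
  also have "\<dots> = (\<Sum>\<sigma>\<in>configs L. ?h l \<sigma>) * (\<Prod>i\<in>{1..n}-{l}. \<Sum>\<sigma>\<in>configs L. ?h i \<sigma>)"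
    using l by (simp add: prod.remove)
  also have "\<dots> = (\<Sum>\<sigma>\<in>configs L. u \<sigma> * ?w \<sigma>) * ?Z ^ (n - 1)"
    using l by (simp add: Zpart_def)
  finally have eq: "(\<Sum>s\<in>PiE {1..n} (\<lambda>_. configs L). u (s l) * exp (- \<beta> * (\<Sum>i=1..n. Ham L J (s i))))
     = (\<Sum>\<sigma>\<in>configs L. u \<sigma> * ?w \<sigma>) * ?Z ^ (n - 1)" .
  have n: "?Z ^ n = ?Z * ?Z ^ (n - 1)" using l by (cases n) auto
  show ?thesis unfolding Omega_def[of _ _ _ n] Omega_1[OF L] eq n using Z by simp
qed




lemma Ham_sum_upd:
  assumes "finite L" "X \<in> Pow L"
  shows "(\<Sum>i=1..n. Ham L (J(X:=t)) (s i)) = (\<Sum>i=1..n. Ham L J (s i)) + (J X - t) * (\<Sum>i=1..n. sigX (s i) X)"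
  by (simp add: Ham_upd[OF assms] sum.distrib sum_distrib_left)

lemma Omega_deriv:
  assumes L: "finite L" and X: "X \<in> Pow L"
  shows "((\<lambda>t. Omega L (J(X:=t)) \<beta> n f) has_real_derivative
     \<beta> * (Omega L (J(X:=t)) \<beta> n (\<lambda>s. f s * (\<Sum>i=1..n. sigX (s i) X))
        - real n * Omega L (J(X:=t)) \<beta> n f * Omega L (J(X:=t)) \<beta> 1 (\<lambda>s. sigX (s 1) X))) (at t)"
proof -
  let ?P = "PiE {1..n} (\<lambda>_. configs L)"
  define A where "A s = (\<Sum>i=1..n. Ham L J (s i))" for s
  define B where "B s = (\<Sum>i=1..n. sigX (s i) X)" for s
  define N where "N g t = (\<Sum>s\<in>?P. g s * exp (- \<beta> * (A s + (J X - t) * B s)))" for g t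
  define Z where "Z t = (\<Sum>\<sigma>\<in>configs L. exp (- \<beta> * (Ham L J \<sigma> + (J X - t) * sigX \<sigma> X)))" for t
  define S where "S t = (\<Sum>\<sigma>\<in>configs L. sigX \<sigma> X * exp (- \<beta> * (Ham L J \<sigma> + (J X - t) * sigX \<sigma> X)))" for t
  have Om: "Omega L (J(X:=t)) \<beta> n g = N g t / Z t ^ n" for g t
    unfolding Omega_def Ham_sum_upd[OF L X] unfolding N_def Z_def Zpart_def A_def B_def Ham_upd[OF L X] ..
  have Om1: "Omega L (J(X:=t)) \<beta> 1 (\<lambda>s. sigX (s 1) X) = S t / Z t" for t
    unfolding Omega_1[OF L, of _ _ "\<lambda>\<sigma>. sigX \<sigma> X"] S_def Z_def Zpart_def Ham_upd[OF L X] ..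
  have Zpos: "Z t > 0" for t
    using Zpart_pos[OF L, of "J(X:=t)" \<beta>] unfolding Z_def Zpart_def Ham_upd[OF L X] .
  have dN: "((\<lambda>t. N g t) has_real_derivative \<beta> * N (\<lambda>s. g s * B s) t) (at t)" for g t
  proof -
    have "((\<lambda>t. N g t) has_real_derivative
        (\<Sum>s\<in>?P. g s * (exp (- \<beta> * (A s + (J X - t) * B s)) * (\<beta> * B s)))) (at t)"
      unfolding N_def
      by (intro DERIV_sum) (auto intro!: derivative_eq_intros simp: algebra_simps)
    moreover have "(\<Sum>s\<in>?P. g s * (exp (- \<beta> * (A s + (J X - t) * B s)) * (\<beta> * B s))) = \<beta> * N (\<lambda>s. g s * B s) t"
      unfolding N_def sum_distrib_left by (intro sum.cong refl) (simp add: algebra_simps)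
    ultimately show ?thesis by simp
  qed
  have dZ: "(Z has_real_derivative \<beta> * S t) (at t)" for t
  proof -
    have "(Z has_real_derivative
        (\<Sum>\<sigma>\<in>configs L. exp (- \<beta> * (Ham L J \<sigma> + (J X - t) * sigX \<sigma> X)) * (\<beta> * sigX \<sigma> X))) (at t)"
      unfolding Z_def[abs_def]
      by (intro DERIV_sum) (auto intro!: derivative_eq_intros simp: algebra_simps)
    moreover have "(\<Sum>\<sigma>\<in>configs L. exp (- \<beta> * (Ham L J \<sigma> + (J X - t) * sigX \<sigma> X)) * (\<beta> * sigX \<sigma> X)) = \<beta> * S t"
      unfolding S_def sum_distrib_left by (intro sum.cong refl) (simp add: algebra_simps)
    ultimately show ?thesis by simp
  qed
  have d: "((\<lambda>t. N f t / Z t ^ n) has_real_derivative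
      ((\<beta> * N (\<lambda>s. f s * B s) t) * Z t ^ n - N f t * (real n * (\<beta> * S t * Z t ^ (n - 1)))) / (Z t ^ n * Z t ^ n)) (at t)"
    using Zpos[of t] DERIV_power[OF dZ[of t], of n] by (intro DERIV_divide dN) auto
  have eq: "((\<beta> * N (\<lambda>s. f s * B s) t) * Z t ^ n - N f t * (real n * (\<beta> * S t * Z t ^ (n - 1)))) / (Z t ^ n * Z t ^ n)
     = \<beta> * (N (\<lambda>s. f s * B s) t / Z t ^ n - real n * (N f t / Z t ^ n) * (S t / Z t))"
  proof (cases n)
    case 0 then show ?thesis using Zpos[of t] by (simp add: field_simps)
  next
    case (Suc m)
    then show ?thesis using Zpos[of t] by (simp add: field_simps)
  qed
  show ?thesis unfolding Om Om1 B_def[symmetric] using d eq by (simp only:)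
qed




abbreviation NN :: "real measure" where "NN \<equiv> density lborel std_normal_density"

lemma std_normal_deriv:
  "((\<lambda>x. std_normal_density x) has_real_derivative (- x * std_normal_density x)) (at x)"
  unfolding std_normal_density_def
  by (auto intro!: derivative_eq_intros simp: field_simps power2_eq_square)

lemma std_normal_tendsto_top: "((\<lambda>x. std_normal_density x) \<longlongrightarrow> 0) at_top"
  unfolding std_normal_density_def by real_asymp
lemma std_normal_tendsto_bot: "((\<lambda>x. std_normal_density x) \<longlongrightarrow> 0) at_bot"
  unfolding std_normal_density_def by real_asymp

lemma gauss_ibp_lborel:
  fixes f f' :: "real \<Rightarrow> real"
  assumes d: "\<And>x. (f has_real_derivative f' x) (at x)"
    and c: "\<And>x. isCont f' x"
    and bf: "\<And>x. \<bar>f x\<bar> \<le> B" and bf': "\<And>x. \<bar>f' x\<bar> \<le> B'"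
  shows "(\<integral>x. std_normal_density x * (x * f x) \<partial>lborel) = (\<integral>x. std_normal_density x * f' x \<partial>lborel)"
proof -
  have contf: "continuous_on UNIV f"
    using d by (meson DERIV_isCont continuous_at_imp_continuous_on)
  have contf': "continuous_on UNIV f'"
    using c by (simp add: continuous_at_imp_continuous_on)
  have mf[measurable]: "f \<in> borel_measurable borel" using contf by (rule borel_measurable_continuous_onI)
  have mf'[measurable]: "f' \<in> borel_measurable borel" using contf' by (rule borel_measurable_continuous_onI)
  have i1: "integrable lborel (\<lambda>x. std_normal_density x * (x * f x))"
  proof (rule Bochner_Integration.integrable_bound)
    show "integrable lborel (\<lambda>x. B * (std_normal_density x * \<bar>x\<bar>^1))"
      using integrable_std_normal_moment_abs[of 1] by simp
    show "AE x in lborel. norm (std_normal_density x * (x * f x)) \<le> norm (B * (std_normal_density x * \<bar>x\<bar>^1))"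
    proof (rule AE_I2)
      fix x
      have "\<bar>std_normal_density x * (x * f x)\<bar> = std_normal_density x * \<bar>x\<bar> * \<bar>f x\<bar>"
        by (simp add: abs_mult normal_density_nonneg)
      also have "\<dots> \<le> std_normal_density x * \<bar>x\<bar> * B"
        by (intro mult_left_mono bf) (simp add: normal_density_nonneg)
      also have "\<dots> \<le> std_normal_density x * \<bar>x\<bar> * \<bar>B\<bar>"
        by (intro mult_left_mono) (auto simp: normal_density_nonneg)
      finally show "norm (std_normal_density x * (x * f x)) \<le> norm (B * (std_normal_density x * \<bar>x\<bar>^1))"
        by (simp add: abs_mult normal_density_nonneg mult_ac)
    qed
  qed measurable
  have i2: "integrable lborel (\<lambda>x. std_normal_density x * f' x)"
  proof (rule Bochner_Integration.integrable_bound)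
    show "integrable lborel (\<lambda>x. B' * (std_normal_density x * \<bar>x\<bar>^0))"
      using integrable_std_normal_moment_abs[of 0] by simp
    show "AE x in lborel. norm (std_normal_density x * f' x) \<le> norm (B' * (std_normal_density x * \<bar>x\<bar>^0))"
    proof (rule AE_I2)
      fix x
      have "\<bar>std_normal_density x * f' x\<bar> = std_normal_density x * \<bar>f' x\<bar>"
        by (simp add: abs_mult normal_density_nonneg)
      also have "\<dots> \<le> std_normal_density x * B'"
        by (intro mult_left_mono bf') (simp add: normal_density_nonneg)
      also have "\<dots> \<le> std_normal_density x * \<bar>B'\<bar>"
        by (intro mult_left_mono) (auto simp: normal_density_nonneg)
      finally show "norm (std_normal_density x * f' x) \<le> norm (B' * (std_normal_density x * \<bar>x\<bar>^0))"
        by (simp add: abs_mult normal_density_nonneg mult_ac)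
    qed
  qed measurable
  let ?g = "\<lambda>x. std_normal_density x * (x * f x) - std_normal_density x * f' x"
  let ?F = "\<lambda>x. - (std_normal_density x * f x)"
  have lim: "(?F \<longlongrightarrow> 0) F" if "F = at_top \<or> F = at_bot" for F
  proof -
    have "((\<lambda>x. std_normal_density x) \<longlongrightarrow> 0) F"
      using that std_normal_tendsto_top std_normal_tendsto_bot by blast
    then have "((\<lambda>x. std_normal_density x * B) \<longlongrightarrow> 0) F"
      by (auto intro: tendsto_mult_left_zero)
    then have "((\<lambda>x. std_normal_density x * f x) \<longlongrightarrow> 0) F"
    proof (rule Lim_null_comparison[rotated])
      show "\<forall>\<^sub>F x in F. norm (std_normal_density x * f x) \<le> std_normal_density x * B"
        by (intro always_eventually allI) (simp add: abs_mult normal_density_nonneg mult_left_mono bf)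
    qed
    then show ?thesis using tendsto_minus by fastforce
  qed
  have "(LBINT x=-\<infinity>..\<infinity>. ?g x) = 0 - 0"
  proof (rule interval_integral_FTC_integrable)
    show "(?F has_vector_derivative ?g x) (at x)" for x
      unfolding has_real_derivative_iff_has_vector_derivative[symmetric]
      by (rule derivative_eq_intros std_normal_deriv d refl)+ (simp add: algebra_simps)
    show "isCont ?g x" for x
      using contf c DERIV_isCont[OF std_normal_deriv] by (auto intro!: continuous_intros simp: continuous_on_eq_continuous_at)
    show "set_integrable lborel (einterval (- \<infinity>) \<infinity>) ?g"
      unfolding set_integrable_def using i1 i2 by simp
    show "((?F \<circ> real_of_ereal) \<longlongrightarrow> 0) (at_right (- \<infinity>))"
      unfolding ereal_tendsto_simps1 using lim by blast
    show "((?F \<circ> real_of_ereal) \<longlongrightarrow> 0) (at_left \<infinity>)"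
      unfolding ereal_tendsto_simps1 using lim by blast
  qed simp
  then have "(\<integral>x. ?g x \<partial>lborel) = 0"
    by (simp add: interval_lebesgue_integral_def set_lebesgue_integral_def)
  then show ?thesis using i1 i2 by simp
qed


lemma prob_NN: "prob_space NN"
  by (rule prob_space_normal_density) simp

lemma prob_PiNN: "prob_space (PiM I (\<lambda>_. NN))"
  by (intro prob_space_PiM prob_NN)

lemma sets_NN[measurable_cong]: "sets NN = sets borel"
  by simp

lemma gauss_ibp:
  fixes f f' :: "real \<Rightarrow> real"
  assumes d: "\<And>x. (f has_real_derivative f' x) (at x)"
    and c: "\<And>x. isCont f' x"
    and bf: "\<And>x. \<bar>f x\<bar> \<le> B" and bf': "\<And>x. \<bar>f' x\<bar> \<le> B'"
  shows "(\<integral>x. x * f x \<partial>NN) = (\<integral>x. f' x \<partial>NN)"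
proof -
  have contf: "continuous_on UNIV f"
    using d by (meson DERIV_isCont continuous_at_imp_continuous_on)
  have contf': "continuous_on UNIV f'"
    using c by (simp add: continuous_at_imp_continuous_on)
  have mf[measurable]: "f \<in> borel_measurable borel" using contf by (rule borel_measurable_continuous_onI)
  have mf'[measurable]: "f' \<in> borel_measurable borel" using contf' by (rule borel_measurable_continuous_onI)
  have "(\<integral>x. x * f x \<partial>NN) = (\<integral>x. std_normal_density x * (x * f x) \<partial>lborel)"
    by (subst integral_density) (auto simp: normal_density_nonneg)
  also have "\<dots> = (\<integral>x. std_normal_density x * f' x \<partial>lborel)"
    by (rule gauss_ibp_lborel[OF d c bf bf'])
  also have "\<dots> = (\<integral>x. f' x \<partial>NN)"
    by (subst integral_density) (auto simp: normal_density_nonneg)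
  finally show ?thesis .
qed

lemma meas_comp[measurable]:
  assumes "i \<in> I"
  shows "(\<lambda>x. x i) \<in> borel_measurable (PiM I (\<lambda>_. NN))"
proof -
  have "(\<lambda>x. x i) \<in> measurable (PiM I (\<lambda>_. NN)) NN"
    by (rule measurable_component_singleton[OF assms])
  also have "measurable (PiM I (\<lambda>_. NN)) NN = borel_measurable (PiM I (\<lambda>_. NN))"
    by (rule measurable_cong_sets) auto
  finally show ?thesis .
qed

lemma integrable_component:
  assumes "i \<in> I"
  shows "integrable (PiM I (\<lambda>_. NN)) (\<lambda>x. x i)"
proof -
  have "integrable NN (\<lambda>x. x)"
    using integrable_std_normal_moment[of 1]
    by (subst integrable_density) (auto simp: normal_density_nonneg)
  then have "integrable (distr (PiM I (\<lambda>_. NN)) NN (\<lambda>x. x i)) (\<lambda>x. x)"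
    using distr_PiM_component[of I "\<lambda>_. NN" i, OF prob_NN assms] by simp
  then show ?thesis
  proof -
    have m1: "(\<lambda>x. x i) \<in> measurable (PiM I (\<lambda>_. NN)) NN" by (rule measurable_component_singleton[OF assms])
    have m2: "(\<lambda>x::real. x) \<in> borel_measurable NN" by simp
    show ?thesis using integrable_distr_eq[OF m1 m2] \<open>integrable (distr _ _ _) _\<close> by simp
  qed
qed

lemma integrable_bounded_Pi:
  fixes F :: "('i \<Rightarrow> real) \<Rightarrow> real"
  assumes "F \<in> borel_measurable (PiM I (\<lambda>_. NN))" "\<And>x. \<bar>F x\<bar> \<le> B"
  shows "integrable (PiM I (\<lambda>_. NN)) F"
proof -
  interpret prob_space "PiM I (\<lambda>_. NN)" by (rule prob_PiNN)
  show ?thesis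
  proof (rule integrable_const_bound[where B=B])
    show "AE x in PiM I (\<lambda>_. NN). norm (F x) \<le> B" by (rule AE_I2) (simp add: assms(2))
  qed (rule assms(1))
qed

lemma integrable_component_mult:
  fixes F :: "('i \<Rightarrow> real) \<Rightarrow> real"
  assumes i: "i \<in> I" and m: "F \<in> borel_measurable (PiM I (\<lambda>_. NN))" and b: "\<And>x. \<bar>F x\<bar> \<le> B"
  shows "integrable (PiM I (\<lambda>_. NN)) (\<lambda>x. x i * F x)"
proof (rule Bochner_Integration.integrable_bound)
  show "integrable (PiM I (\<lambda>_. NN)) (\<lambda>x. B * x i)"
    using integrable_component[OF i] by simp
  have "(\<lambda>x. x i) \<in> borel_measurable (PiM I (\<lambda>_. NN))"
    using meas_comp[OF i] .
  then show "(\<lambda>x. x i * F x) \<in> borel_measurable (PiM I (\<lambda>_. NN))"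
    using m by measurable
  show "AE x in PiM I (\<lambda>_. NN). norm (x i * F x) \<le> norm (B * x i)"
  proof (rule AE_I2)
    fix x
    have "\<bar>x i * F x\<bar> \<le> \<bar>x i\<bar> * B" by (simp add: abs_mult mult_left_mono b)
    also have "\<dots> \<le> \<bar>x i\<bar> * \<bar>B\<bar>" by (simp add: mult_left_mono)
    finally show "norm (x i * F x) \<le> norm (B * x i)" by (simp add: abs_mult mult.commute)
  qed
qed

lemma pi_ibp:
  fixes \<Phi> \<Psi> :: "('i \<Rightarrow> real) \<Rightarrow> real"
  assumes I: "finite I" "i \<in> I"
    and m\<Phi>: "\<Phi> \<in> borel_measurable (PiM I (\<lambda>_. NN))"
    and m\<Psi>: "\<Psi> \<in> borel_measurable (PiM I (\<lambda>_. NN))"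
    and b\<Phi>: "\<And>x. \<bar>\<Phi> x\<bar> \<le> B" and b\<Psi>: "\<And>x. \<bar>\<Psi> x\<bar> \<le> B'"
    and d: "\<And>x y. ((\<lambda>y. \<Phi> (x(i:=y))) has_real_derivative \<Psi> (x(i:=y))) (at y)"
    and c: "\<And>x y. isCont (\<lambda>y. \<Psi> (x(i:=y))) y"
  shows "(\<integral>x. x i * \<Phi> x \<partial>PiM I (\<lambda>_. NN)) = (\<integral>x. \<Psi> x \<partial>PiM I (\<lambda>_. NN))"
proof -
  interpret product_sigma_finite "\<lambda>_. NN"
    by (simp add: product_sigma_finite_def prob_space_imp_sigma_finite prob_NN)
  have II: "I = insert i (I - {i})" using I by auto
  have fin: "finite (I - {i})" "i \<notin> I - {i}" using I by auto
  have i1: "integrable (PiM (insert i (I - {i})) (\<lambda>_. NN)) (\<lambda>x. x i * \<Phi> x)"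
    using integrable_component_mult[OF I(2) m\<Phi> b\<Phi>] II by simp
  have i2: "integrable (PiM (insert i (I - {i})) (\<lambda>_. NN)) \<Psi>"
    using integrable_bounded_Pi[OF m\<Psi> b\<Psi>] II by simp
  have "(\<integral>x. x i * \<Phi> x \<partial>PiM I (\<lambda>_. NN)) = (\<integral>x. x i * \<Phi> x \<partial>PiM (insert i (I - {i})) (\<lambda>_. NN))"
    using II by simp
  also have "\<dots> = (\<integral>x. (\<integral>y. (x(i:=y)) i * \<Phi> (x(i:=y)) \<partial>NN) \<partial>PiM (I - {i}) (\<lambda>_. NN))"
    by (rule product_integral_insert[OF fin i1])
  also have "\<dots> = (\<integral>x. (\<integral>y. \<Psi> (x(i:=y)) \<partial>NN) \<partial>PiM (I - {i}) (\<lambda>_. NN))"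
  proof (rule Bochner_Integration.integral_cong[OF refl])
    fix x
    show "(\<integral>y. (x(i:=y)) i * \<Phi> (x(i:=y)) \<partial>NN) = (\<integral>y. \<Psi> (x(i:=y)) \<partial>NN)"
      using gauss_ibp[of "\<lambda>y. \<Phi> (x(i:=y))" "\<lambda>y. \<Psi> (x(i:=y))", OF d c b\<Phi> b\<Psi>] by simp
  qed
  also have "\<dots> = (\<integral>x. \<Psi> x \<partial>PiM (insert i (I - {i})) (\<lambda>_. NN))"
    by (rule product_integral_insert[OF fin i2, symmetric])
  also have "\<dots> = (\<integral>x. \<Psi> x \<partial>PiM I (\<lambda>_. NN))"
    using II by simp
  finally show ?thesis .
qed




abbreviation PM :: "'p set \<Rightarrow> ('p set \<Rightarrow> real) measure" where
  "PM L \<equiv> PiM (Pow L) (\<lambda>_. NN)"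

lemma Ham_meas[measurable]:
  assumes "finite L"
  shows "(\<lambda>g. Ham L (\<lambda>Y. \<Delta> Y * g Y) \<sigma>) \<in> borel_measurable (PM L)"
  unfolding Ham_def
  by (intro borel_measurable_uminus borel_measurable_sum borel_measurable_times borel_measurable_const meas_comp)

lemma Omega_meas[measurable]:
  assumes L: "finite L"
  shows "(\<lambda>g. Omega L (\<lambda>Y. \<Delta> Y * g Y) \<beta> n f) \<in> borel_measurable (PM L)"
  unfolding Omega_def Zpart_def using Ham_meas[OF L] by measurable

lemma Omega_integrable:
  assumes L: "finite L"
  shows "integrable (PM L) (\<lambda>g. Omega L (\<lambda>Y. \<Delta> Y * g Y) \<beta> n f)"
  by (rule integrable_bounded_Pi[OF Omega_meas[OF L] Omega_bound[OF L]])




lemma Omega_one: "finite L \<Longrightarrow> Omega L J \<beta> 1 (\<lambda>_. 1) = 1"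
  using Omega_1[of L J \<beta> "\<lambda>_. 1"] Zpart_pos[of L J \<beta>] by (simp add: Zpart_def)

lemma Omega_lift:
  assumes L: "finite L" and f: "\<And>g y. f (g(Suc n := y)) = f g"
  shows "Omega L J \<beta> (Suc n) f = Omega L J \<beta> n f"
  using Omega_factor[OF L f, of J \<beta> "\<lambda>_. 1"] Omega_one[OF L, of J \<beta>] by simp

lemma JJ_upd: "(\<lambda>Y. \<Delta> Y * (g(X:=y)) Y) = (\<lambda>Y. \<Delta> Y * g Y)(X := \<Delta> X * y)"
  by auto

lemma Omega_deriv_g:
  assumes L: "finite L" and X: "X \<in> Pow L"
  shows "((\<lambda>y. Omega L (\<lambda>Y. \<Delta> Y * (g(X:=y)) Y) \<beta> n f) has_real_derivative
     \<beta> * (Omega L (\<lambda>Y. \<Delta> Y * (g(X:=y)) Y) \<beta> n (\<lambda>s. f s * (\<Sum>i=1..n. sigX (s i) X))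
        - real n * Omega L (\<lambda>Y. \<Delta> Y * (g(X:=y)) Y) \<beta> n f * Omega L (\<lambda>Y. \<Delta> Y * (g(X:=y)) Y) \<beta> 1 (\<lambda>s. sigX (s 1) X)) * \<Delta> X) (at y)"
  unfolding JJ_upd
proof (rule DERIV_chain'[of "\<lambda>y. \<Delta> X * y", where g="\<lambda>t. Omega L ((\<lambda>Y. \<Delta> Y * g Y)(X := t)) \<beta> n f"])
  show "((*) (\<Delta> X) has_real_derivative \<Delta> X) (at y)"
    by (auto intro!: derivative_eq_intros)
  show "((\<lambda>t. Omega L ((\<lambda>Y. \<Delta> Y * g Y)(X := t)) \<beta> n f) has_real_derivative
    \<beta> * (Omega L ((\<lambda>Y. \<Delta> Y * g Y)(X := \<Delta> X * y)) \<beta> n (\<lambda>s. f s * (\<Sum>i = 1..n. sigX (s i) X)) -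
         real n * Omega L ((\<lambda>Y. \<Delta> Y * g Y)(X := \<Delta> X * y)) \<beta> n f *
         Omega L ((\<lambda>Y. \<Delta> Y * g Y)(X := \<Delta> X * y)) \<beta> 1 (\<lambda>s. sigX (s 1) X))) (at (\<Delta> X * y))"
    by (rule Omega_deriv[OF L X])
qed

lemma Omega_cont_g:
  assumes L: "finite L" and X: "X \<in> Pow L"
  shows "isCont (\<lambda>y. Omega L (\<lambda>Y. \<Delta> Y * (g(X:=y)) Y) \<beta> n f) y"
  by (rule DERIV_isCont[OF Omega_deriv_g[OF L X]])

lemma Omega_psi:
  assumes L: "finite L" and f: "\<And>g y. f (g(Suc m := y)) = f g"
  shows "Omega L J \<beta> m (\<lambda>s. f s * (\<Sum>i=1..m. sigX (s i) X)) - real m * Omega L J \<beta> m f * Omega L J \<beta> 1 (\<lambda>s. sigX (s 1) X)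
    = Omega L J \<beta> (Suc m) (\<lambda>s. f s * (\<Sum>i=1..m. sigX (s i) X) - real m * (f s * sigX (s (Suc m)) X))"
proof -
  have inv: "(\<lambda>s. f s * (\<Sum>i=1..m. sigX (s i) X)) (g(Suc m := y)) = (\<lambda>s. f s * (\<Sum>i=1..m. sigX (s i) X)) g" for g y
    by (simp add: f)
  show ?thesis
    unfolding Omega_diff Omega_cmult Omega_factor[OF L f, of J \<beta> "\<lambda>\<sigma>. sigX \<sigma> X"] Omega_lift[OF L inv] by simp
qed




lemma Omega_ibp:
  assumes L: "finite L" and X: "X \<in> Pow L" and F: "\<And>g y. F (g(Suc m := y)) = F g"
  shows "(\<integral>g. g X * Omega L (\<lambda>Y. \<Delta> Y * g Y) \<beta> m F \<partial>PM L)
       = (\<integral>g. \<beta> * \<Delta> X * Omega L (\<lambda>Y. \<Delta> Y * g Y) \<beta> (Suc m)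
              (\<lambda>s. F s * (\<Sum>i=1..m. sigX (s i) X) - real m * (F s * sigX (s (Suc m)) X)) \<partial>PM L)"
proof (rule pi_ibp)
  show "finite (Pow L)" "X \<in> Pow L" using L X by auto
  show "(\<lambda>g. Omega L (\<lambda>Y. \<Delta> Y * g Y) \<beta> m F) \<in> borel_measurable (PM L)"
    by (rule Omega_meas[OF L])
  show "(\<lambda>g. \<beta> * \<Delta> X * Omega L (\<lambda>Y. \<Delta> Y * g Y) \<beta> (Suc m)
              (\<lambda>s. F s * (\<Sum>i=1..m. sigX (s i) X) - real m * (F s * sigX (s (Suc m)) X))) \<in> borel_measurable (PM L)"
    using Omega_meas[OF L] by measurable
  show "\<bar>Omega L (\<lambda>Y. \<Delta> Y * g Y) \<beta> m F\<bar> \<le> (\<Sum>s\<in>PiE {1..m} (\<lambda>_. configs L). \<bar>F s\<bar>)" for g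
    by (rule Omega_bound[OF L])
  show "\<bar>\<beta> * \<Delta> X * Omega L (\<lambda>Y. \<Delta> Y * g Y) \<beta> (Suc m)
              (\<lambda>s. F s * (\<Sum>i=1..m. sigX (s i) X) - real m * (F s * sigX (s (Suc m)) X))\<bar>
     \<le> \<bar>\<beta> * \<Delta> X\<bar> * (\<Sum>s\<in>PiE {1..Suc m} (\<lambda>_. configs L). \<bar>F s * (\<Sum>i=1..m. sigX (s i) X) - real m * (F s * sigX (s (Suc m)) X)\<bar>)" for g
    unfolding abs_mult[of "\<beta> * \<Delta> X"] by (intro mult_left_mono Omega_bound[OF L]) auto
  show "((\<lambda>y. Omega L (\<lambda>Y. \<Delta> Y * (g(X:=y)) Y) \<beta> m F) has_real_derivative
      \<beta> * \<Delta> X * Omega L (\<lambda>Y. \<Delta> Y * (g(X:=y)) Y) \<beta> (Suc m)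
              (\<lambda>s. F s * (\<Sum>i=1..m. sigX (s i) X) - real m * (F s * sigX (s (Suc m)) X))) (at y)" for g y
    by (rule DERIV_cong[OF Omega_deriv_g[OF L X]], subst Omega_psi[OF L F]) (simp only: mult_ac)
  show "isCont (\<lambda>y. \<beta> * \<Delta> X * Omega L (\<lambda>Y. \<Delta> Y * (g(X:=y)) Y) \<beta> (Suc m)
              (\<lambda>s. F s * (\<Sum>i=1..m. sigX (s i) X) - real m * (F s * sigX (s (Suc m)) X))) y" for g y
    by (intro continuous_intros Omega_cont_g[OF L X])
qed




definition QQ where
  "QQ L \<Delta> \<beta> \<iota> G n a b J = Omega L J \<beta> n (\<lambda>s. obs L \<Delta> \<iota> G s * cov L \<Delta> (s a) (s b))"

definition FF where
  "FF L \<Delta> \<iota> G R l X s = sigX (s l) X * obs L \<Delta> \<iota> G s - obs L \<Delta> \<iota> G s * sigX (s (Suc R)) X"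

definition EE where
  "EE L \<Delta> \<iota> G R l X s = FF L \<Delta> \<iota> G R l X s * (\<Sum>i=1..Suc R. sigX (s i) X)
     - real (Suc R) * (FF L \<Delta> \<iota> G R l X s * sigX (s (Suc (Suc R))) X)"

lemma cov_sym: "cov L \<Delta> \<sigma> \<tau> = cov L \<Delta> \<tau> \<sigma>"
  unfolding cov_def by (simp add: mult_ac)

lemma cov_alt: "cov L \<Delta> \<sigma> \<tau> = (\<Sum>X\<in>Pow L. (\<Delta> X)\<^sup>2 / real (card L) * sigX \<sigma> X * sigX \<tau> X)"
  unfolding cov_def sum_distrib_left by (simp add: mult_ac)

lemma lin_aux:
  fixes w p q u :: "'x \<Rightarrow> real" and r :: "nat \<Rightarrow> 'x \<Rightarrow> real"
  assumes "finite A"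
  shows "(\<Sum>X\<in>A. w X * ((p X * ob - ob * q X) * (\<Sum>i\<in>I. r i X) - k * ((p X * ob - ob * q X) * u X)))
    = (\<Sum>i\<in>I. ob * (\<Sum>X\<in>A. w X * p X * r i X) - ob * (\<Sum>X\<in>A. w X * q X * r i X))
      - k * (ob * (\<Sum>X\<in>A. w X * p X * u X) - ob * (\<Sum>X\<in>A. w X * q X * u X))"
proof -
  have "(\<Sum>X\<in>A. w X * ((p X * ob - ob * q X) * (\<Sum>i\<in>I. r i X) - k * ((p X * ob - ob * q X) * u X)))
      = (\<Sum>X\<in>A. (\<Sum>i\<in>I. ob * (w X * p X * r i X) - ob * (w X * q X * r i X))
          - k * (ob * (w X * p X * u X) - ob * (w X * q X * u X)))"
    by (intro sum.cong refl) (simp add: sum_distrib_left sum_subtractf algebra_simps)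
  also have "\<dots> = (\<Sum>i\<in>I. \<Sum>X\<in>A. ob * (w X * p X * r i X) - ob * (w X * q X * r i X))
          - k * (ob * (\<Sum>X\<in>A. w X * p X * u X) - ob * (\<Sum>X\<in>A. w X * q X * u X))"
    by (simp add: sum_subtractf sum_distrib_left sum.swap[of _ A I] right_diff_distrib)
  also have "\<dots> = (\<Sum>i\<in>I. ob * (\<Sum>X\<in>A. w X * p X * r i X) - ob * (\<Sum>X\<in>A. w X * q X * r i X))
      - k * (ob * (\<Sum>X\<in>A. w X * p X * u X) - ob * (\<Sum>X\<in>A. w X * q X * u X))"
    by (simp add: sum_subtractf sum_distrib_left)
  finally show ?thesis .
qed

context
  fixes L :: "'p set" and \<Delta> :: "'p set \<Rightarrow> real" and \<beta> :: real and R :: nat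
    and \<iota> :: "'r::finite \<Rightarrow> nat" and G :: "real^'r^'r \<Rightarrow> real"
  assumes L: "finite L" and iota: "\<And>a. \<iota> a \<in> {1..R}"
begin

lemma obs_inv: "R < k \<Longrightarrow> obs L \<Delta> \<iota> G (s(k:=y)) = obs L \<Delta> \<iota> G s"
proof -
  assume k: "R < k"
  have "\<forall>a. \<iota> a \<noteq> k" using iota k by (metis atLeastAtMost_iff not_le)
  then show ?thesis unfolding obs_def by simp
qed

lemma stepA:
  assumes l: "l \<in> {1..R}"
  shows "Omega L J \<beta> R (\<lambda>s. Ham L J (s l) / real (card L) * obs L \<Delta> \<iota> G s)
       - Omega L J \<beta> R (\<lambda>s. Ham L J (s l) / real (card L)) * Omega L J \<beta> R (obs L \<Delta> \<iota> G)
     = - (1 / real (card L)) * (\<Sum>X\<in>Pow L. J X * Omega L J \<beta> (Suc R)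
          (\<lambda>s. sigX (s l) X * obs L \<Delta> \<iota> G s - obs L \<Delta> \<iota> G s * sigX (s (Suc R)) X))"
proof -
  let ?c = "real (card L)"
  let ?ob = "obs L \<Delta> \<iota> G"
  have h: "Ham L J \<sigma> / ?c = - (1 / ?c) * (\<Sum>X\<in>Pow L. J X * sigX \<sigma> X)" for \<sigma>
    by (simp add: Ham_def)
  have 1: "Omega L J \<beta> R (\<lambda>s. Ham L J (s l) / ?c * ?ob s) = - (1 / ?c) * (\<Sum>X\<in>Pow L. J X * Omega L J \<beta> R (\<lambda>s. sigX (s l) X * ?ob s))"
  proof -
    have "(\<lambda>s. Ham L J (s l) / ?c * ?ob s) = (\<lambda>s. - (1 / ?c) * (\<Sum>X\<in>Pow L. J X * (sigX (s l) X * ?ob s)))"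
      by (rule ext) (simp add: h sum_distrib_left mult_ac)
    then show ?thesis using L by (simp only: Omega_cmult Omega_sum finite_Pow_iff)
  qed
  have 2: "Omega L J \<beta> R (\<lambda>s. Ham L J (s l) / ?c) = - (1 / ?c) * (\<Sum>X\<in>Pow L. J X * Omega L J \<beta> 1 (\<lambda>s. sigX (s 1) X))"
  proof -
    have "(\<lambda>s. Ham L J (s l) / ?c) = (\<lambda>s. - (1 / ?c) * (\<Sum>X\<in>Pow L. J X * sigX (s l) X))"
      by (auto simp: h)
    then have "Omega L J \<beta> R (\<lambda>s. Ham L J (s l) / ?c) = - (1 / ?c) * (\<Sum>X\<in>Pow L. J X * Omega L J \<beta> R (\<lambda>s. sigX (s l) X))"
      using L by (simp only: Omega_cmult Omega_sum finite_Pow_iff)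
    also have "\<dots> = - (1 / ?c) * (\<Sum>X\<in>Pow L. J X * Omega L J \<beta> 1 (\<lambda>s. sigX (s 1) X))"
      using Omega_marg[OF L l, of J \<beta>] by (simp only: Omega_marg[OF L l, of J \<beta> "\<lambda>\<sigma>. sigX \<sigma> X" for X])
    finally show ?thesis .
  qed
  have 3: "Omega L J \<beta> (Suc R) (\<lambda>s. sigX (s l) X * ?ob s - ?ob s * sigX (s (Suc R)) X)
     = Omega L J \<beta> R (\<lambda>s. sigX (s l) X * ?ob s) - Omega L J \<beta> R ?ob * Omega L J \<beta> 1 (\<lambda>s. sigX (s 1) X)" for X
  proof -
    have i1: "(\<lambda>s. sigX (s l) X * ?ob s) (g(Suc R := y)) = (\<lambda>s. sigX (s l) X * ?ob s) g" for g y
      using l by (simp add: obs_inv)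
    have i2: "?ob (g(Suc R := y)) = ?ob g" for g y by (simp add: obs_inv)
    show ?thesis
      unfolding Omega_diff Omega_lift[OF L i1] Omega_factor[OF L i2, of J \<beta> "\<lambda>\<sigma>. sigX \<sigma> X"] ..
  qed
  show ?thesis unfolding 1 2 3
    by (simp add: sum_distrib_left sum_distrib_right sum_subtractf algebra_simps)
qed


lemma stepB:
  assumes l: "l \<in> {1..R}"
  shows "Av L \<Delta> (\<lambda>J. Omega L J \<beta> R (\<lambda>s. Ham L J (s l) / real (card L) * obs L \<Delta> \<iota> G s)
       - Omega L J \<beta> R (\<lambda>s. Ham L J (s l) / real (card L)) * Omega L J \<beta> R (obs L \<Delta> \<iota> G))
     = - \<beta> * (\<Sum>X\<in>Pow L. (\<Delta> X)\<^sup>2 / real (card L) * Av L \<Delta> (\<lambda>J. Omega L J \<beta> (Suc (Suc R)) (EE L \<Delta> \<iota> G R l X)))"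
proof -
  let ?c = "real (card L)"
  let ?F = "\<lambda>X. FF L \<Delta> \<iota> G R l X"
  have FFe: "?F X = (\<lambda>s. sigX (s l) X * obs L \<Delta> \<iota> G s - obs L \<Delta> \<iota> G s * sigX (s (Suc R)) X)" for X
    by (rule ext) (simp add: FF_def)
  have EEe: "EE L \<Delta> \<iota> G R l X = (\<lambda>s. ?F X s * (\<Sum>i=1..Suc R. sigX (s i) X) - real (Suc R) * (?F X s * sigX (s (Suc (Suc R))) X))" for X
    by (rule ext) (simp add: EE_def)
  have Finv: "?F X (g(Suc (Suc R) := y)) = ?F X g" for X g y
    using l by (simp add: FF_def obs_inv)
  have int1: "integrable (PM L) (\<lambda>g. g X * Omega L (\<lambda>Y. \<Delta> Y * g Y) \<beta> (Suc R) (?F X))" if "X \<in> Pow L" for X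
    by (rule integrable_component_mult[OF that Omega_meas[OF L] Omega_bound[OF L]])
  have "Av L \<Delta> (\<lambda>J. Omega L J \<beta> R (\<lambda>s. Ham L J (s l) / ?c * obs L \<Delta> \<iota> G s)
       - Omega L J \<beta> R (\<lambda>s. Ham L J (s l) / ?c) * Omega L J \<beta> R (obs L \<Delta> \<iota> G))
     = (\<integral>g. - (1 / ?c) * (\<Sum>X\<in>Pow L. \<Delta> X * (g X * Omega L (\<lambda>Y. \<Delta> Y * g Y) \<beta> (Suc R) (?F X))) \<partial>PM L)"
    unfolding Av_def stepA[OF l] FFe by (simp add: mult_ac)
  also have "\<dots> = - (1 / ?c) * (\<Sum>X\<in>Pow L. \<Delta> X * (\<integral>g. g X * Omega L (\<lambda>Y. \<Delta> Y * g Y) \<beta> (Suc R) (?F X) \<partial>PM L))"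
    using int1 by (simp add: integral_sum L)
  also have "\<dots> = - (1 / ?c) * (\<Sum>X\<in>Pow L. \<Delta> X * (\<beta> * \<Delta> X * Av L \<Delta> (\<lambda>J. Omega L J \<beta> (Suc (Suc R)) (EE L \<Delta> \<iota> G R l X))))"
  proof (intro arg_cong[where f="\<lambda>x. - (1 / ?c) * x"] sum.cong refl)
    fix X assume X: "X \<in> Pow L"
    have "(\<integral>g. g X * Omega L (\<lambda>Y. \<Delta> Y * g Y) \<beta> (Suc R) (?F X) \<partial>PM L)
       = (\<integral>g. \<beta> * \<Delta> X * Omega L (\<lambda>Y. \<Delta> Y * g Y) \<beta> (Suc (Suc R)) (EE L \<Delta> \<iota> G R l X) \<partial>PM L)"
      unfolding EEe by (rule Omega_ibp[OF L X Finv])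
    also have "\<dots> = \<beta> * \<Delta> X * Av L \<Delta> (\<lambda>J. Omega L J \<beta> (Suc (Suc R)) (EE L \<Delta> \<iota> G R l X))"
      unfolding Av_def by simp
    finally show "\<Delta> X * (\<integral>g. g X * Omega L (\<lambda>Y. \<Delta> Y * g Y) \<beta> (Suc R) (?F X) \<partial>PM L)
       = \<Delta> X * (\<beta> * \<Delta> X * Av L \<Delta> (\<lambda>J. Omega L J \<beta> (Suc (Suc R)) (EE L \<Delta> \<iota> G R l X)))" by simp
  qed
  also have "\<dots> = - \<beta> * (\<Sum>X\<in>Pow L. (\<Delta> X)\<^sup>2 / ?c * Av L \<Delta> (\<lambda>J. Omega L J \<beta> (Suc (Suc R)) (EE L \<Delta> \<iota> G R l X)))"
    by (simp add: sum_distrib_left power2_eq_square mult_ac)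
  finally show ?thesis .
qed

lemma QQ_expand:
  "QQ L \<Delta> \<beta> \<iota> G n a b J = (\<Sum>X\<in>Pow L. (\<Delta> X)\<^sup>2 / real (card L) *
      Omega L J \<beta> n (\<lambda>s. obs L \<Delta> \<iota> G s * sigX (s a) X * sigX (s b) X))"
proof -
  have "(\<lambda>s. obs L \<Delta> \<iota> G s * cov L \<Delta> (s a) (s b)) = (\<lambda>s. \<Sum>X\<in>Pow L. (\<Delta> X)\<^sup>2 / real (card L) *
      (obs L \<Delta> \<iota> G s * sigX (s a) X * sigX (s b) X))"
    by (rule ext) (simp add: cov_alt sum_distrib_left mult_ac)
  then show ?thesis unfolding QQ_def using L by (simp only: Omega_cmult Omega_sum finite_Pow_iff)
qed

lemma conv_i:
  assumes "a \<in> {1..R}" "b \<in> {1..R}"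
  shows "QQ L \<Delta> \<beta> \<iota> G (Suc (Suc R)) a b J = QQ L \<Delta> \<beta> \<iota> G R a b J"
proof -
  let ?f = "\<lambda>s. obs L \<Delta> \<iota> G s * cov L \<Delta> (s a) (s b)"
  have i1: "?f (g(Suc (Suc R) := y)) = ?f g" for g y using assms by (simp add: obs_inv)
  have i2: "?f (g(Suc R := y)) = ?f g" for g y using assms by (simp add: obs_inv)
  show ?thesis unfolding QQ_def Omega_lift[of L ?f "Suc R", OF L i1] Omega_lift[of L ?f R, OF L i2] ..
qed

lemma conv_ii:
  assumes "a \<in> {1..R}"
  shows "QQ L \<Delta> \<beta> \<iota> G (Suc (Suc R)) a (Suc R) J = QQ L \<Delta> \<beta> \<iota> G (Suc R) a (Suc R) J"
proof -
  let ?f = "\<lambda>s. obs L \<Delta> \<iota> G s * cov L \<Delta> (s a) (s (Suc R))"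
  have i1: "?f (g(Suc (Suc R) := y)) = ?f g" for g y
  proof -
    have "(g(Suc (Suc R) := y)) a = g a" "(g(Suc (Suc R) := y)) (Suc R) = g (Suc R)" using assms by auto
    moreover have "obs L \<Delta> \<iota> G (g(Suc (Suc R) := y)) = obs L \<Delta> \<iota> G g" by (rule obs_inv) simp
    ultimately show ?thesis by (simp only:)
  qed
  show ?thesis unfolding QQ_def Omega_lift[of L ?f "Suc R", OF L i1] ..
qed

lemma conv_iii:
  assumes "a \<in> {1..R}"
  shows "QQ L \<Delta> \<beta> \<iota> G (Suc (Suc R)) (Suc R) a J = QQ L \<Delta> \<beta> \<iota> G (Suc R) a (Suc R) J"
proof -
  have e: "cov L \<Delta> (s (Suc R)) (s a) = cov L \<Delta> (s a) (s (Suc R))" for s by (rule cov_sym)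
  show ?thesis using conv_ii[OF assms] unfolding QQ_def e .
qed

lemma conv_diag:
  assumes "a \<in> {1..n}" "b \<in> {1..n}"
  shows "QQ L \<Delta> \<beta> \<iota> G n a a J = QQ L \<Delta> \<beta> \<iota> G n b b J"
  unfolding QQ_def
proof (rule Omega_cong)
  fix s assume s: "s \<in> PiE {1..n} (\<lambda>_. configs L)"
  have "cov L \<Delta> (s c) (s c) = (\<Sum>X\<in>Pow L. (\<Delta> X)\<^sup>2 / real (card L) * (if X = {} then 0 else 1))" if "c \<in> {1..n}" for c
  proof -
    have sc: "s c \<in> configs L" using s that by auto
    show ?thesis unfolding cov_alt
      by (intro sum.cong refl) (use sigX_sq[OF sc] in \<open>auto simp: mult.assoc\<close>)
  qed
  then show "obs L \<Delta> \<iota> G s * cov L \<Delta> (s a) (s a) = obs L \<Delta> \<iota> G s * cov L \<Delta> (s b) (s b)"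
    using assms by simp
qed

lemma conv_v:
  assumes "a \<in> {1..R}"
  shows "QQ L \<Delta> \<beta> \<iota> G (Suc (Suc R)) a (Suc (Suc R)) J = QQ L \<Delta> \<beta> \<iota> G (Suc R) a (Suc R) J"
  unfolding QQ_expand
proof (intro sum.cong refl arg_cong[where f="\<lambda>x. _ * x"])
  fix X
  let ?f = "\<lambda>s. obs L \<Delta> \<iota> G s * sigX (s a) X"
  have i1: "?f (g(Suc (Suc R) := y)) = ?f g" for g y using assms by (simp add: obs_inv)
  have i2: "?f (g(Suc R := y)) = ?f g" for g y using assms by (simp add: obs_inv)
  show "Omega L J \<beta> (Suc (Suc R)) (\<lambda>s. obs L \<Delta> \<iota> G s * sigX (s a) X * sigX (s (Suc (Suc R))) X) =
        Omega L J \<beta> (Suc R) (\<lambda>s. obs L \<Delta> \<iota> G s * sigX (s a) X * sigX (s (Suc R)) X)"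
    unfolding Omega_factor[of L ?f "Suc R", OF L i1, of J \<beta> "\<lambda>\<sigma>. sigX \<sigma> X"] Omega_factor[of L ?f R, OF L i2, of J \<beta> "\<lambda>\<sigma>. sigX \<sigma> X"]
      Omega_lift[of L ?f R, OF L i2] ..
qed

lemma stepC_l:
  assumes l: "l \<in> {1..R}"
  shows "(\<Sum>X\<in>Pow L. (\<Delta> X)\<^sup>2 / real (card L) * Omega L J \<beta> (Suc (Suc R)) (EE L \<Delta> \<iota> G R l X))
    = (\<Sum>i\<in>{1..R}-{l}. QQ L \<Delta> \<beta> \<iota> G R l i J) - (\<Sum>i=1..R. QQ L \<Delta> \<beta> \<iota> G (Suc R) i (Suc R) J)
      - real R * QQ L \<Delta> \<beta> \<iota> G (Suc R) l (Suc R) J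
      + real (Suc R) * QQ L \<Delta> \<beta> \<iota> G (Suc (Suc R)) (Suc R) (Suc (Suc R)) J"
proof -
  let ?ob = "obs L \<Delta> \<iota> G"
  let ?w = "\<lambda>X. (\<Delta> X)\<^sup>2 / real (card L)"
  let ?Q2 = "\<lambda>a b. QQ L \<Delta> \<beta> \<iota> G (Suc (Suc R)) a b J"
  let ?Q1 = "\<lambda>a b. QQ L \<Delta> \<beta> \<iota> G (Suc R) a b J"
  let ?Q0 = "\<lambda>a b. QQ L \<Delta> \<beta> \<iota> G R a b J"
  have 1: "(\<Sum>X\<in>Pow L. ?w X * Omega L J \<beta> (Suc (Suc R)) (EE L \<Delta> \<iota> G R l X))
     = Omega L J \<beta> (Suc (Suc R)) (\<lambda>s. \<Sum>X\<in>Pow L. ?w X * EE L \<Delta> \<iota> G R l X s)"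
    using L by (simp only: Omega_sum Omega_cmult finite_Pow_iff)
  have 2: "(\<lambda>s. \<Sum>X\<in>Pow L. ?w X * EE L \<Delta> \<iota> G R l X s) =
    (\<lambda>s. (\<Sum>i\<in>{1..Suc R}. ?ob s * cov L \<Delta> (s l) (s i) - ?ob s * cov L \<Delta> (s (Suc R)) (s i))
       - real (Suc R) * (?ob s * cov L \<Delta> (s l) (s (Suc (Suc R))) - ?ob s * cov L \<Delta> (s (Suc R)) (s (Suc (Suc R)))))"
  proof (rule ext)
    fix s
    show "(\<Sum>X\<in>Pow L. ?w X * EE L \<Delta> \<iota> G R l X s) =
      (\<Sum>i\<in>{1..Suc R}. ?ob s * cov L \<Delta> (s l) (s i) - ?ob s * cov L \<Delta> (s (Suc R)) (s i))
       - real (Suc R) * (?ob s * cov L \<Delta> (s l) (s (Suc (Suc R))) - ?ob s * cov L \<Delta> (s (Suc R)) (s (Suc (Suc R))))"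
      unfolding EE_def FF_def cov_alt
      by (rule lin_aux[of "Pow L" ?w "\<lambda>X. sigX (s l) X" "?ob s" "\<lambda>X. sigX (s (Suc R)) X" "\<lambda>i X. sigX (s i) X" "{1..Suc R}"
            "real (Suc R)" "\<lambda>X. sigX (s (Suc (Suc R))) X"]) (use L in simp)
  qed
  have 3: "Omega L J \<beta> (Suc (Suc R)) (\<lambda>s. \<Sum>X\<in>Pow L. ?w X * EE L \<Delta> \<iota> G R l X s)
     = (\<Sum>i\<in>{1..Suc R}. ?Q2 l i - ?Q2 (Suc R) i) - real (Suc R) * (?Q2 l (Suc (Suc R)) - ?Q2 (Suc R) (Suc (Suc R)))"
    unfolding 2 QQ_def by (simp only: Omega_diff Omega_sum Omega_cmult finite_atLeastAtMost)
  have 4: "(\<Sum>i\<in>{1..Suc R}. ?Q2 l i - ?Q2 (Suc R) i) = (\<Sum>i\<in>{1..R}. ?Q2 l i - ?Q2 (Suc R) i) + (?Q2 l (Suc R) - ?Q2 (Suc R) (Suc R))"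
    by simp
  have 5: "(\<Sum>i\<in>{1..R}. ?Q2 l i - ?Q2 (Suc R) i) = (\<Sum>i\<in>{1..R}. ?Q2 l i) - (\<Sum>i\<in>{1..R}. ?Q1 i (Suc R))"
    by (simp add: sum_subtractf conv_iii)
  have 6: "(\<Sum>i\<in>{1..R}. ?Q2 l i) = ?Q2 l l + (\<Sum>i\<in>{1..R}-{l}. ?Q0 l i)"
  proof -
    have "(\<Sum>i\<in>{1..R}. ?Q2 l i) = ?Q2 l l + (\<Sum>i\<in>{1..R}-{l}. ?Q2 l i)"
      using l by (simp add: sum.remove)
    also have "(\<Sum>i\<in>{1..R}-{l}. ?Q2 l i) = (\<Sum>i\<in>{1..R}-{l}. ?Q0 l i)"
      using l by (intro sum.cong refl conv_i) auto
    finally show ?thesis .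
  qed
  have 7: "?Q2 l (Suc R) = ?Q1 l (Suc R)" by (rule conv_ii[OF l])
  have 8: "?Q2 (Suc R) (Suc R) = ?Q2 l l" using l by (intro conv_diag) auto
  have 9: "?Q2 l (Suc (Suc R)) = ?Q1 l (Suc R)" by (rule conv_v[OF l])
  show ?thesis unfolding 1 3 4 5 6 7 8 9 by (simp add: algebra_simps)
qed

lemma QQ_int: "integrable (PM L) (\<lambda>g. QQ L \<Delta> \<beta> \<iota> G n a b (\<lambda>Y. \<Delta> Y * g Y))"
  unfolding QQ_def by (rule Omega_integrable[OF L])

lemma QQ_sym: "QQ L \<Delta> \<beta> \<iota> G n a b J = QQ L \<Delta> \<beta> \<iota> G n b a J"
proof -
  have e: "cov L \<Delta> (s a) (s b) = cov L \<Delta> (s b) (s a)" for s by (rule cov_sym)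
  show ?thesis unfolding QQ_def e ..
qed

lemma stepD_l:
  assumes l: "l \<in> {1..R}"
  shows "(\<Sum>X\<in>Pow L. (\<Delta> X)\<^sup>2 / real (card L) * Av L \<Delta> (\<lambda>J. Omega L J \<beta> (Suc (Suc R)) (EE L \<Delta> \<iota> G R l X)))
    = (\<Sum>i\<in>{1..R}-{l}. Av L \<Delta> (QQ L \<Delta> \<beta> \<iota> G R l i)) - (\<Sum>i=1..R. Av L \<Delta> (QQ L \<Delta> \<beta> \<iota> G (Suc R) i (Suc R)))
      - real R * Av L \<Delta> (QQ L \<Delta> \<beta> \<iota> G (Suc R) l (Suc R))
      + real (Suc R) * Av L \<Delta> (QQ L \<Delta> \<beta> \<iota> G (Suc (Suc R)) (Suc R) (Suc (Suc R)))"
proof -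
  have "(\<Sum>X\<in>Pow L. (\<Delta> X)\<^sup>2 / real (card L) * Av L \<Delta> (\<lambda>J. Omega L J \<beta> (Suc (Suc R)) (EE L \<Delta> \<iota> G R l X)))
     = (\<integral>g. (\<Sum>X\<in>Pow L. (\<Delta> X)\<^sup>2 / real (card L) * Omega L (\<lambda>Y. \<Delta> Y * g Y) \<beta> (Suc (Suc R)) (EE L \<Delta> \<iota> G R l X)) \<partial>PM L)"
    unfolding Av_def using L by (simp add: integral_sum Omega_integrable)
  also have "\<dots> = (\<integral>g. (\<Sum>i\<in>{1..R}-{l}. QQ L \<Delta> \<beta> \<iota> G R l i (\<lambda>Y. \<Delta> Y * g Y))
      - (\<Sum>i=1..R. QQ L \<Delta> \<beta> \<iota> G (Suc R) i (Suc R) (\<lambda>Y. \<Delta> Y * g Y))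
      - real R * QQ L \<Delta> \<beta> \<iota> G (Suc R) l (Suc R) (\<lambda>Y. \<Delta> Y * g Y)
      + real (Suc R) * QQ L \<Delta> \<beta> \<iota> G (Suc (Suc R)) (Suc R) (Suc (Suc R)) (\<lambda>Y. \<Delta> Y * g Y) \<partial>PM L)"
    unfolding stepC_l[OF l] ..
  also have "\<dots> = (\<Sum>i\<in>{1..R}-{l}. Av L \<Delta> (QQ L \<Delta> \<beta> \<iota> G R l i)) - (\<Sum>i=1..R. Av L \<Delta> (QQ L \<Delta> \<beta> \<iota> G (Suc R) i (Suc R)))
      - real R * Av L \<Delta> (QQ L \<Delta> \<beta> \<iota> G (Suc R) l (Suc R))
      + real (Suc R) * Av L \<Delta> (QQ L \<Delta> \<beta> \<iota> G (Suc (Suc R)) (Suc R) (Suc (Suc R)))"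
    unfolding Av_def by (simp add: integral_sum integral_diff integral_add QQ_int integrable_sum integrable_diff integrable_add)
  finally show ?thesis .
qed

lemma main_gen:
  "Delta1 L \<Delta> \<beta> R \<iota> G =
    - \<beta> * ((\<Sum>k\<in>{1..R}. \<Sum>l\<in>{1..R}-{k}. bracket L \<Delta> \<beta> R \<iota> G l k)
           - 2 * real R * (\<Sum>l=1..R. bracket L \<Delta> \<beta> R \<iota> G l (R+1))
           + real R * real (R+1) * bracket L \<Delta> \<beta> R \<iota> G (R+1) (R+2))"
proof -
  let ?A = "\<lambda>n a b. Av L \<Delta> (QQ L \<Delta> \<beta> \<iota> G n a b)"
  have b0: "bracket L \<Delta> \<beta> R \<iota> G l k = ?A R k l" if "k \<in> {1..R}" "l \<in> {1..R}-{k}" for k l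
  proof -
    have "max R (max l k) = R" using that by auto
    moreover have "QQ L \<Delta> \<beta> \<iota> G R l k = QQ L \<Delta> \<beta> \<iota> G R k l" by (rule ext) (rule QQ_sym)
    ultimately show ?thesis unfolding bracket_def QQ_def[abs_def] by simp
  qed
  have b1: "bracket L \<Delta> \<beta> R \<iota> G l (R+1) = ?A (Suc R) l (Suc R)" if "l \<in> {1..R}" for l
  proof -
    have "max R (max l (R+1)) = Suc R" using that by auto
    then show ?thesis unfolding bracket_def QQ_def[abs_def] by simp
  qed
  have b2: "bracket L \<Delta> \<beta> R \<iota> G (R+1) (R+2) = ?A (Suc (Suc R)) (Suc R) (Suc (Suc R))"
  proof -
    have "max R (max (R+1) (R+2)) = Suc (Suc R)" by auto
    then show ?thesis unfolding bracket_def QQ_def[abs_def] by simp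
  qed
  have "Delta1 L \<Delta> \<beta> R \<iota> G = (\<Sum>l=1..R. - \<beta> * ((\<Sum>i\<in>{1..R}-{l}. ?A R l i) - (\<Sum>i=1..R. ?A (Suc R) i (Suc R))
      - real R * ?A (Suc R) l (Suc R) + real (Suc R) * ?A (Suc (Suc R)) (Suc R) (Suc (Suc R))))"
    unfolding Delta1_def by (intro sum.cong refl) (simp only: stepB stepD_l)
  also have "\<dots> = - \<beta> * ((\<Sum>l=1..R. \<Sum>i\<in>{1..R}-{l}. ?A R l i)
           - 2 * real R * (\<Sum>l=1..R. ?A (Suc R) l (Suc R))
           + real R * real (R+1) * ?A (Suc (Suc R)) (Suc R) (Suc (Suc R)))"
  proof -
    let ?S = "\<lambda>l. (\<Sum>i\<in>{1..R}-{l}. ?A R l i)"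
    let ?T = "(\<Sum>i=1..R. ?A (Suc R) i (Suc R))"
    let ?a = "\<lambda>l. ?A (Suc R) l (Suc R)"
    let ?c = "real (Suc R) * ?A (Suc (Suc R)) (Suc R) (Suc (Suc R))"
    have "(\<Sum>l=1..R. - \<beta> * (?S l - ?T - real R * ?a l + ?c)) = - \<beta> * (\<Sum>l=1..R. (?S l - ?T - real R * ?a l + ?c))"
      by (simp add: sum_distrib_left)
    also have "(\<Sum>l=1..R. (?S l - ?T - real R * ?a l + ?c)) = (\<Sum>l=1..R. ?S l) - real R * ?T - real R * ?T + real R * ?c"
      by (simp add: sum.distrib sum_subtractf sum_distrib_left[symmetric])
    finally show ?thesis by (simp add: algebra_simps)
  qed
  also have "\<dots> = - \<beta> * ((\<Sum>k\<in>{1..R}. \<Sum>l\<in>{1..R}-{k}. bracket L \<Delta> \<beta> R \<iota> G l k)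
           - 2 * real R * (\<Sum>l=1..R. bracket L \<Delta> \<beta> R \<iota> G l (R+1))
           + real R * real (R+1) * bracket L \<Delta> \<beta> R \<iota> G (R+1) (R+2))"
  proof -
    have s0: "(\<Sum>k\<in>{1..R}. \<Sum>l\<in>{1..R}-{k}. bracket L \<Delta> \<beta> R \<iota> G l k) = (\<Sum>l=1..R. \<Sum>i\<in>{1..R}-{l}. ?A R l i)"
      by (rule sum.cong[OF refl], rule sum.cong[OF refl], rule b0) auto
    have s1: "(\<Sum>l=1..R. bracket L \<Delta> \<beta> R \<iota> G l (R+1)) = (\<Sum>l=1..R. ?A (Suc R) l (Suc R))"
      by (rule sum.cong[OF refl], rule b1) auto
    show ?thesis unfolding s0 s1 b2 ..
  qed
  finally show ?thesis .
qed
end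



lemma finite_box: "finite (box_set (a::int^'d) b)"
proof (rule finite_subset)
  show "box_set a b \<subseteq> (\<lambda>f. \<chi> i. f i) ` PiE UNIV (\<lambda>i. {a$i..b$i})"
  proof
    fix x assume "x \<in> box_set a b"
    then have "(\<lambda>i. x$i) \<in> PiE UNIV (\<lambda>i. {a$i..b$i})" by (auto simp: box_set_def)
    moreover have "x = (\<chi> i. (\<lambda>i. x$i) i)" by simp
    ultimately show "x \<in> (\<lambda>f. \<chi> i. f i) ` PiE UNIV (\<lambda>i. {a$i..b$i})" by blast
  qed
  show "finite ((\<lambda>f. \<chi> i. f i) ` PiE UNIV (\<lambda>i. {a$i..b$i}))"
    by (intro finite_imageI finite_PiE) auto
qed

theorem lemma2:
  fixes a b :: "int^'d" and \<Delta> :: "(int^'d) set \<Rightarrow> real" and \<beta> :: real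
    and R :: nat and \<iota> :: "'r::finite \<Rightarrow> nat" and G :: "real^'r^'r \<Rightarrow> real"
  assumes box: "\<forall>i. a $ i \<le> b $ i"
    and Delta_nonneg: "\<forall>X. \<Delta> X \<ge> 0"
    and transl_inv: "\<forall>X t. \<Delta> ((\<lambda>x. x + t) ` X) = \<Delta> X"
    and R_ge1: "R \<ge> 1"
    and enum: "bij_betw \<iota> UNIV {1..R}"
    and smooth: "smooth_fun G"
    and bounded: "\<forall>M. \<bar>G M\<bar> \<le> 1"
  shows "Delta1 (box_set a b) \<Delta> \<beta> R \<iota> G =
    - \<beta> * ((\<Sum>k\<in>{1..R}. \<Sum>l\<in>{1..R}-{k}. bracket (box_set a b) \<Delta> \<beta> R \<iota> G l k)
           - 2 * real R * (\<Sum>l=1..R. bracket (box_set a b) \<Delta> \<beta> R \<iota> G l (R+1))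
           + real R * real (R+1) * bracket (box_set a b) \<Delta> \<beta> R \<iota> G (R+1) (R+2))"
proof -
  have iota: "\<iota> x \<in> {1..R}" for x using bij_betwE[OF enum] by blast
  show ?thesis by (rule main_gen[OF finite_box iota])
qed

end
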